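(* Let $n\ge3$ and $0\le k\le n-2$ be integers. Then the polynomial $a_{n,k}$ has total degree exactly $2+k$.
   Context: Let $T_1,T_2,\dots$ be indeterminates. Define linear operators $L,H$ on monomials (constants sent to $0$): $L(T_{\alpha_1}\cdots T_{\alpha_r})=\sum_{1\le i<j\le r}T_{\alpha_1}\cdots T_{\alpha_i+1}\cdots T_{\alpha_j+1}\cdots T_{\alpha_r}$, $H(T_{\alpha_1}\cdots T_{\alpha_r})=-\frac12\sum_{k=1}^{r}\sum_{l=1}^{\alpha_k-1}\binom{\alpha_k}{l}T_{1+l}T_{1+\alpha_k-l}\prod_{i\ne k}T_{\alpha_i}$. For $n\ge2$ let $A_n=-\sum_{k=1}^{n-1}\binom{n}{k}T_{1+k}T_{1+n-k}T_n$; set $R_2=0$, $R_{n+1}=A_n+L(R_n)+H(R_n)$. For $0\le k\le n-2$, $a_{n,k}$ denotes the polynomial obtained by taking all monomials of $R_{n+1}$ (with their coefficients) whose largest variable index is $n-k$ and dividing them by $T_{n-k}$, so that $R_{n+1}=\sum_{k=0}^{n-2}a_{n,k}T_{n-k}$. *)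

theory Defs
  imports Complex_Main "HOL-Library.Multiset" "HOL-Library.Poly_Mapping"
begin

text \<open>A monomial T_{a_1}...T_{a_r} is the multiset of its indices {#a_1,...,a_r#};
  a polynomial is a finitely supported map from monomials to coefficients.\<close>

type_synonym monom = "nat multiset"
type_synonym tpoly = "monom \<Rightarrow>\<^sub>0 rat"

definition L_mon :: "rat \<Rightarrow> nat list \<Rightarrow> tpoly" where
  "L_mon c xs = (\<Sum>i<length xs. \<Sum>j\<in>{i<..<length xs}.
      Poly_Mapping.single (mset (xs[i := xs!i + 1, j := xs!j + 1])) c)"

definition H_mon :: "rat \<Rightarrow> nat list \<Rightarrow> tpoly" where
  "H_mon c xs = (\<Sum>k<length xs. \<Sum>l\<in>{1..<xs!k}.
      Poly_Mapping.single (mset xs - {#xs!k#} + {#1 + l, 1 + xs!k - l#})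
        (- (1/2) * of_nat (xs!k choose l) * c))"

definition lin_ext :: "(rat \<Rightarrow> nat list \<Rightarrow> tpoly) \<Rightarrow> tpoly \<Rightarrow> tpoly" where
  "lin_ext f p = (\<Sum>m\<in>Poly_Mapping.keys p. f (Poly_Mapping.lookup p m) (sorted_list_of_multiset m))"

definition Lop :: "tpoly \<Rightarrow> tpoly" where "Lop = lin_ext L_mon"
definition Hop :: "tpoly \<Rightarrow> tpoly" where "Hop = lin_ext H_mon"

definition A_pol :: "nat \<Rightarrow> tpoly" where
  "A_pol n = (\<Sum>k\<in>{1..n-1}. Poly_Mapping.single {#1 + k, 1 + n - k, n#} (- of_nat (n choose k)))"

text \<open>R 2 = 0 and R (n+1) = A n + L (R n) + H (R n) for n \<ge> 2; values below 2 are irrelevant.\<close>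
fun R :: "nat \<Rightarrow> tpoly" where
  "R 0 = 0"
| "R (Suc n) = (if n < 2 then 0 else A_pol n + Lop (R n) + Hop (R n))"

definition a_coef :: "nat \<Rightarrow> nat \<Rightarrow> tpoly" where
  "a_coef n k = (\<Sum>m\<in>{m\<in>Poly_Mapping.keys (R (n+1)). n - k \<in># m \<and> (\<forall>x\<in>#m. x \<le> n - k)}.
      Poly_Mapping.single (m - {#n - k#}) (Poly_Mapping.lookup (R (n+1)) m))"

definition total_degree :: "tpoly \<Rightarrow> nat" where
  "total_degree p = Max (insert 0 (size ` Poly_Mapping.keys p))"

end

theory Submission
  imports Defs
begin

definition N :: "tpoly \<Rightarrow> monom \<Rightarrow> rat" where
  "N p m = (-1)^size m * Poly_Mapping.lookup p m"

lemma len_sorted: "length (sorted_list_of_multiset m) = size m"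
  by (metis mset_sorted_list_of_multiset size_mset)

lemma lookup_lin_ext:
  "Poly_Mapping.lookup (lin_ext f p) m =
   (\<Sum>m'\<in>Poly_Mapping.keys p. Poly_Mapping.lookup (f (Poly_Mapping.lookup p m') (sorted_list_of_multiset m')) m)"
  unfolding lin_ext_def lookup_sum by simp

lemma N_lin_ext:
  "N (lin_ext f p) m =
   (\<Sum>m'\<in>Poly_Mapping.keys p. N (f (Poly_Mapping.lookup p m') (sorted_list_of_multiset m')) m)"
  unfolding N_def lookup_lin_ext sum_distrib_left by simp

lemma N_L_mon:
  "N (L_mon c xs) m = (\<Sum>i<length xs. \<Sum>j\<in>{i<..<length xs}.
      if mset (xs[i := xs!i + 1, j := xs!j + 1]) = m then (-1)^length xs * c else 0)"
  unfolding N_def L_mon_def lookup_sum lookup_single when_def sum_distrib_left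
  by (auto intro!: sum.cong)

lemma size_H: "k < length xs \<Longrightarrow> size (mset xs - {#xs!k#} + {#a, b#}) = length xs + 1"
proof -
  assume "k < length xs"
  then have "xs!k \<in># mset xs" by simp
  moreover obtain t where "length xs = Suc t" using \<open>k < length xs\<close> by (cases "length xs") auto
  ultimately show ?thesis by (simp add: size_Diff_singleton)
qed

lemma sign_H: "k < length xs \<Longrightarrow> (-1::rat)^size (mset xs - {#xs!k#}) = - ((-1)^length xs)"
proof -
  assume a: "k < length xs"
  then have "xs!k \<in># mset xs" by simp
  then have "size (mset xs - {#xs!k#}) = length xs - 1" by (simp add: size_Diff_singleton)
  moreover obtain t where "length xs = Suc t" using a by (cases "length xs") auto
  ultimately show ?thesis by simp
qed

lemma N_H_mon:
  "N (H_mon c xs) m = (\<Sum>k<length xs. \<Sum>l\<in>{1..<xs!k}.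
      if mset xs - {#xs!k#} + {#1 + l, 1 + xs!k - l#} = m
      then (1/2) * of_nat (xs!k choose l) * ((-1)^length xs * c) else 0)"
  unfolding N_def H_mon_def lookup_sum lookup_single when_def sum_distrib_left
  by (auto intro!: sum.cong simp: sign_H)

lemma N_A_pol:
  "N (A_pol n) m = (\<Sum>k\<in>{1..n-1}. if {#1 + k, 1 + n - k, n#} = m then of_nat (n choose k) else 0)"
  unfolding N_def A_pol_def lookup_sum lookup_single when_def sum_distrib_left
  by (auto intro!: sum.cong)

lemma N_add: "N (p + q) m = N p m + N q m"
  by (simp add: N_def lookup_add algebra_simps)

lemma nonneg_Lop: assumes "\<forall>m. N p m \<ge> 0" shows "N (Lop p) m \<ge> 0"
  using assms unfolding Lop_def N_lin_ext N_L_mon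
  by (auto simp: len_sorted N_def intro!: sum_nonneg)

lemma nonneg_Hop: assumes "\<forall>m. N p m \<ge> 0" shows "N (Hop p) m \<ge> 0"
  using assms unfolding Hop_def N_lin_ext N_H_mon
  by (auto simp: len_sorted N_def intro!: sum_nonneg)

lemma nonneg_A: "N (A_pol n) m \<ge> 0"
  unfolding N_A_pol by (auto intro!: sum_nonneg)

lemma R_nonneg: "N (R n) m \<ge> 0"
proof (induction n arbitrary: m)
  case 0 then show ?case by (simp add: N_def)
next
  case (Suc n)
  then show ?case
    by (auto simp: N_add N_def[of 0] intro!: add_nonneg_nonneg nonneg_A nonneg_Lop nonneg_Hop)
qed

lemma sum_nz: "sum f A \<noteq> 0 \<Longrightarrow> \<exists>a\<in>A. f a \<noteq> 0"
  by (meson sum.neutral)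

lemma lin_ext_nz:
  "Poly_Mapping.lookup (lin_ext f p) m \<noteq> 0 \<Longrightarrow>
   \<exists>m'\<in>Poly_Mapping.keys p. Poly_Mapping.lookup (f (Poly_Mapping.lookup p m') (sorted_list_of_multiset m')) m \<noteq> 0"
  unfolding lookup_lin_ext by (meson sum.neutral)

lemma L_mon_nz:
  assumes "Poly_Mapping.lookup (L_mon c xs) m \<noteq> 0"
  shows "size m = length xs \<and> (\<forall>x\<in>#m. \<exists>y\<in>set xs. x \<le> y + 1)"
proof -
  have "(\<Sum>i<length xs. \<Sum>j\<in>{i<..<length xs}.
      if mset (xs[i := xs!i + 1, j := xs!j + 1]) = m then c else 0) \<noteq> 0"
    using assms unfolding L_mon_def lookup_sum lookup_single when_def by simp
  from sum_nz[OF this] obtain i where i: "i \<in> {..<length xs}" "(\<Sum>j\<in>{i<..<length xs}.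
      if mset (xs[i := xs!i + 1, j := xs!j + 1]) = m then c else 0) \<noteq> 0"
    by blast
  from sum_nz[OF i(2)] obtain j where j: "j \<in> {i<..<length xs}"
      "(if mset (xs[i := xs!i + 1, j := xs!j + 1]) = m then c else 0) \<noteq> 0"
    by blast
  have ij: "i < length xs" "j \<in> {i<..<length xs}"
    "mset (xs[i := xs!i + 1, j := xs!j + 1]) = m" using i j by (auto split: if_splits)
  have "set (xs[i := xs!i + 1, j := xs!j + 1]) \<subseteq> insert (xs!j+1) (insert (xs!i+1) (set xs))"
    by (meson dual_order.trans insert_mono set_update_subset_insert)
  moreover have "xs!i \<in> set xs" "xs!j \<in> set xs" using ij by auto
  ultimately have "\<forall>x\<in>set (xs[i := xs!i + 1, j := xs!j + 1]). \<exists>y\<in>set xs. x \<le> y + 1"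
  proof (intro ballI)
    fix x assume "x \<in> set (xs[i := xs!i + 1, j := xs!j + 1])"
      "set (xs[i := xs!i + 1, j := xs!j + 1]) \<subseteq> insert (xs!j+1) (insert (xs!i+1) (set xs))"
      "xs!i \<in> set xs" "xs!j \<in> set xs"
    then have "x = xs!j+1 \<or> x = xs!i+1 \<or> x \<in> set xs" by blast
    then show "\<exists>y\<in>set xs. x \<le> y + 1"
      using \<open>xs!i \<in> set xs\<close> \<open>xs!j \<in> set xs\<close> by (elim disjE) (auto intro: le_SucI)
  qed
  moreover have "size m = length xs" using ij(3)[symmetric] by simp
  ultimately show ?thesis using ij(3)[symmetric] by simp
qed

lemma H_mon_nz:
  assumes "Poly_Mapping.lookup (H_mon c xs) m \<noteq> 0"
  shows "size m = length xs + 1 \<and> (\<forall>x\<in>#m. \<exists>y\<in>set xs. x \<le> y)"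
proof -
  have "(\<Sum>k<length xs. \<Sum>l\<in>{1..<xs!k}.
      if mset xs - {#xs!k#} + {#1 + l, 1 + xs!k - l#} = m
        then - (1/2) * of_nat (xs!k choose l) * c else 0) \<noteq> 0"
    using assms unfolding H_mon_def lookup_sum lookup_single when_def by simp
  from sum_nz[OF this] obtain k where k: "k \<in> {..<length xs}" "(\<Sum>l\<in>{1..<xs!k}.
      if mset xs - {#xs!k#} + {#1 + l, 1 + xs!k - l#} = m
        then - (1/2) * of_nat (xs!k choose l) * c else 0) \<noteq> 0"
    by blast
  from sum_nz[OF k(2)] obtain l where l: "l \<in> {1..<xs!k}" "(if mset xs - {#xs!k#} + {#1 + l, 1 + xs!k - l#} = m
        then - (1/2) * of_nat (xs!k choose l) * c else 0) \<noteq> 0"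
    by blast
  have kl: "k < length xs" "l \<in> {1..<xs!k}"
    "mset xs - {#xs!k#} + {#1 + l, 1 + xs!k - l#} = m" using k l by (auto split: if_splits)
  have mem: "xs!k \<in> set xs" using kl by auto
  have "size m = length xs + 1" unfolding kl(3)[symmetric] by (rule size_H[OF kl(1)])
  moreover have "\<exists>y\<in>set xs. x \<le> y" if "x \<in># m" for x
  proof -
    from that have "x \<in># mset xs - {#xs!k#} + {#1 + l, 1 + xs!k - l#}" unfolding kl(3) .
    then have "x \<in># mset xs - {#xs!k#} \<or> x = 1 + l \<or> x = 1 + xs!k - l"
      by (metis add_mset_add_single insert_DiffM2 insert_noteq_member union_iff)
    moreover have "1 + l \<le> xs!k" "1 + xs!k - l \<le> xs!k" using kl(2) by auto
    ultimately show ?thesis using mem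
    proof (elim disjE)
      assume "x \<in># mset xs - {#xs!k#}"
      then have "x \<in> set xs" by (meson in_diffD in_multiset_in_set)
      then show ?thesis by blast
    qed auto
  qed
  ultimately show ?thesis by blast
qed

lemma R_bound: "Poly_Mapping.lookup (R (Suc n)) m \<noteq> 0 \<Longrightarrow> \<forall>x\<in>#m. x + size m \<le> n + 3"
proof (induction n arbitrary: m)
  case 0 then show ?case by simp
next
  case (Suc n)
  show ?case
  proof (cases "Suc n < 2")
    case True then show ?thesis using Suc.prems by simp
  next
    case False
    then have "Poly_Mapping.lookup (A_pol (Suc n)) m \<noteq> 0 \<or>
      Poly_Mapping.lookup (Lop (R (Suc n))) m \<noteq> 0 \<or> Poly_Mapping.lookup (Hop (R (Suc n))) m \<noteq> 0"
      using Suc.prems by (auto simp: lookup_add)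
    moreover
    { assume "Poly_Mapping.lookup (A_pol (Suc n)) m \<noteq> 0"
      then have "(\<Sum>k\<in>{1..Suc n - 1}. if {#1 + k, 1 + Suc n - k, Suc n#} = m
          then - of_nat (Suc n choose k) else (0::rat)) \<noteq> 0"
        unfolding A_pol_def lookup_sum lookup_single when_def by simp
      from sum_nz[OF this] obtain k where k0: "k \<in> {1..Suc n - 1}" "(if {#1 + k, 1 + Suc n - k, Suc n#} = m
          then - of_nat (Suc n choose k) else (0::rat)) \<noteq> 0"
        by blast
      have k: "k \<in> {1..Suc n - 1}" "{#1 + k, 1 + Suc n - k, Suc n#} = m"
        using k0 by (auto split: if_splits)
      have "size m = 3" using k(2)[symmetric] by simp
      moreover have "\<forall>x\<in>#m. x \<le> Suc n" using k unfolding k(2)[symmetric] by auto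
      ultimately have ?thesis by auto }
    moreover
    { assume "Poly_Mapping.lookup (Lop (R (Suc n))) m \<noteq> 0"
      then obtain m' where m': "m' \<in> Poly_Mapping.keys (R (Suc n))"
        "Poly_Mapping.lookup (L_mon (Poly_Mapping.lookup (R (Suc n)) m') (sorted_list_of_multiset m')) m \<noteq> 0"
        unfolding Lop_def using lin_ext_nz by blast
      from L_mon_nz[OF m'(2)] have h: "size m = size m'" "\<forall>x\<in>#m. \<exists>y\<in>#m'. x \<le> y + 1"
        by (auto simp: len_sorted)
      have "\<forall>x\<in>#m'. x + size m' \<le> n + 3" using Suc.IH m'(1) by (simp add: in_keys_iff)
      then have ?thesis
      proof (intro ballI)
        fix x assume "x \<in># m"
        then obtain y where "y \<in># m'" "x \<le> y + 1" using h(2) by blast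
        then show "x + size m \<le> Suc n + 3" using h(1) \<open>\<forall>x\<in>#m'. x + size m' \<le> n + 3\<close> by fastforce
      qed }
    moreover
    { assume "Poly_Mapping.lookup (Hop (R (Suc n))) m \<noteq> 0"
      then obtain m' where m': "m' \<in> Poly_Mapping.keys (R (Suc n))"
        "Poly_Mapping.lookup (H_mon (Poly_Mapping.lookup (R (Suc n)) m') (sorted_list_of_multiset m')) m \<noteq> 0"
        unfolding Hop_def using lin_ext_nz by blast
      from H_mon_nz[OF m'(2)] have h: "size m = size m' + 1" "\<forall>x\<in>#m. \<exists>y\<in>#m'. x \<le> y"
        by (auto simp: len_sorted)
      have "\<forall>x\<in>#m'. x + size m' \<le> n + 3" using Suc.IH m'(1) by (simp add: in_keys_iff)
      then have ?thesis
      proof (intro ballI)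
        fix x assume "x \<in># m"
        then obtain y where "y \<in># m'" "x \<le> y" using h(2) by blast
        then show "x + size m \<le> Suc n + 3" using h(1) \<open>\<forall>x\<in>#m'. x + size m' \<le> n + 3\<close> by fastforce
      qed }
    ultimately show ?thesis by blast
  qed
qed


lemma N_H_mon_nonneg: "0 \<le> (-1)^length xs * c \<Longrightarrow> 0 \<le> N (H_mon c xs) m"
  unfolding N_H_mon by (auto intro!: sum_nonneg)

lemma Hop_lower:
  assumes nn: "\<forall>m. N p m \<ge> 0" and m': "m' \<in> Poly_Mapping.keys p"
    and k: "k < size m'" and a: "sorted_list_of_multiset m' ! k = a" and l: "l \<in> {1..<a}"
    and eq: "m' - {#a#} + {#1 + l, 1 + a - l#} = m"
  shows "(1/2) * of_nat (a choose l) * N p m' \<le> N (Hop p) m"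
proof -
  define xs where "xs = sorted_list_of_multiset m'"
  have lx: "length xs = size m'" unfolding xs_def by (rule len_sorted)
  have mx: "mset xs = m'" unfolding xs_def by simp
  define g where "g k l = (if mset xs - {#xs!k#} + {#1 + l, 1 + xs!k - l#} = m
      then (1/2) * of_nat (xs!k choose l) * ((-1)^length xs * Poly_Mapping.lookup p m') else (0::rat))" for k l
  have gnn: "0 \<le> g k' l'" for k' l'
    using nn unfolding g_def N_def lx by auto
  have "(1/2) * of_nat (a choose l) * N p m' = g k l"
    unfolding g_def using a eq by (simp add: xs_def[symmetric] mx lx N_def)
  also have "\<dots> \<le> (\<Sum>l\<in>{1..<xs!k}. g k l)"
    by (rule member_le_sum) (use l a gnn xs_def in auto)
  also have "\<dots> \<le> (\<Sum>k<length xs. \<Sum>l\<in>{1..<xs!k}. g k l)"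
    by (rule member_le_sum[where f = "\<lambda>k. \<Sum>l\<in>{1..<xs!k}. g k l"]) (use k lx gnn in \<open>auto intro: sum_nonneg\<close>)
  also have "\<dots> = N (H_mon (Poly_Mapping.lookup p m') xs) m"
    unfolding N_H_mon g_def ..
  also have "\<dots> \<le> (\<Sum>m''\<in>Poly_Mapping.keys p. N (H_mon (Poly_Mapping.lookup p m'') (sorted_list_of_multiset m'')) m)"
    unfolding xs_def
    by (rule member_le_sum[where f = "\<lambda>m''. N (H_mon (Poly_Mapping.lookup p m'') (sorted_list_of_multiset m'')) m"])
       (use m' nn in \<open>auto intro!: N_H_mon_nonneg simp: len_sorted N_def[of p]\<close>)
  also have "\<dots> = N (Hop p) m" unfolding Hop_def N_lin_ext ..
  finally show ?thesis .
qed

lemma A_lower: assumes "c \<ge> 2" shows "of_nat c \<le> N (A_pol c) {#c, c, 2#}"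
proof -
  have "of_nat c = (if {#1 + 1, 1 + c - 1, c#} = {#c, c, 2#} then of_nat (c choose 1) else (0::rat))"
    using assms by simp
  also have "\<dots> \<le> (\<Sum>k\<in>{1..c-1}. if {#1 + k, 1 + c - k, c#} = {#c, c, 2#} then of_nat (c choose k) else 0)"
    by (rule member_le_sum[where f = "\<lambda>k. if {#1 + k, 1 + c - k, c#} = {#c, c, 2#} then of_nat (c choose k) else (0::rat)"])
       (use assms in auto)
  finally show ?thesis unfolding N_A_pol .
qed

definition tgt :: "nat \<Rightarrow> nat \<Rightarrow> monom" where
  "tgt c j = {#c, c#} + replicate_mset (j + 1) 2"

lemma R_expand: "n \<ge> 2 \<Longrightarrow> R (Suc n) = A_pol n + Lop (R n) + Hop (R n)"
  by simp

lemma R_pos: assumes "c \<ge> 2" shows "N (R (Suc (c + j))) (tgt c j) > 0"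
proof (induction j)
  case 0
  have "N (R (Suc c)) (tgt c 0) = N (A_pol c) {#c, c, 2#} + N (Lop (R c)) (tgt c 0) + N (Hop (R c)) (tgt c 0)"
    using assms by (simp add: N_add tgt_def add_mset_commute)
  moreover have "N (Lop (R c)) (tgt c 0) \<ge> 0" "N (Hop (R c)) (tgt c 0) \<ge> 0"
    using R_nonneg nonneg_Lop nonneg_Hop by auto
  moreover have "N (A_pol c) {#c, c, 2#} > 0" using A_lower[OF assms] assms by linarith
  ultimately show ?case by simp
next
  case (Suc j)
  let ?p = "R (Suc (c + j))"
  have key: "tgt c j \<in> Poly_Mapping.keys ?p"
    using Suc.IH unfolding N_def in_keys_iff by auto
  have cin: "c \<in> set (sorted_list_of_multiset (tgt c j))"
    unfolding set_sorted_list_of_multiset by (simp add: tgt_def)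
  then obtain k where k: "k < length (sorted_list_of_multiset (tgt c j))"
    "sorted_list_of_multiset (tgt c j) ! k = c" by (meson in_set_conv_nth)
  have eq: "tgt c j - {#c#} + {#1 + 1, 1 + c - 1#} = tgt c (Suc j)"
    using assms by (simp add: tgt_def)
  have "(1/2) * of_nat (c choose 1) * N ?p (tgt c j) \<le> N (Hop ?p) (tgt c (Suc j))"
  proof (rule Hop_lower[OF _ key _ k(2) _ eq])
    show "\<forall>m. N ?p m \<ge> 0" using R_nonneg by blast
  qed (use k(1) assms in \<open>auto simp: len_sorted\<close>)
  moreover have "(1/2) * of_nat (c choose 1) * N ?p (tgt c j) > 0"
    using Suc.IH assms by simp
  moreover have "N (R (Suc (c + Suc j))) (tgt c (Suc j)) =
      N (A_pol (Suc (c + j))) (tgt c (Suc j)) + N (Lop ?p) (tgt c (Suc j)) + N (Hop ?p) (tgt c (Suc j))"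
    using assms by (simp add: N_add)
  moreover have "N (A_pol (Suc (c + j))) (tgt c (Suc j)) \<ge> 0" by (rule nonneg_A)
  moreover have "N (Lop ?p) (tgt c (Suc j)) \<ge> 0" by (rule nonneg_Lop) (use R_nonneg in blast)
  ultimately show ?case by linarith
qed


lemma a_coef_lookup:
  "Poly_Mapping.lookup (a_coef n k) u =
   (\<Sum>m\<in>{m\<in>Poly_Mapping.keys (R (n+1)). n - k \<in># m \<and> (\<forall>x\<in>#m. x \<le> n - k)}.
      if m - {#n - k#} = u then Poly_Mapping.lookup (R (n+1)) m else 0)"
  unfolding a_coef_def lookup_sum lookup_single when_def by (auto intro!: sum.cong)

theorem mainTheorem12:
  fixes n k :: nat
  assumes "n \<ge> 3" and "k \<le> n - 2"
  shows "a_coef n k \<noteq> 0 \<and> total_degree (a_coef n k) = k + 2"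
proof -
  define c where "c = n - k"
  have c2: "c \<ge> 2" and nck: "n = c + k" using assms unfolding c_def by auto
  define S where "S = {m\<in>Poly_Mapping.keys (R (n+1)). n - k \<in># m \<and> (\<forall>x\<in>#m. x \<le> n - k)}"
  have finS: "finite S" unfolding S_def by simp
  define t where "t = tgt c k"
  have "N (R (Suc (c + k))) t > 0" unfolding t_def by (rule R_pos[OF c2])
  then have tnz: "Poly_Mapping.lookup (R (n+1)) t \<noteq> 0" unfolding N_def nck by auto
  have tS: "t \<in> S" unfolding S_def c_def[symmetric] using tnz c2
    by (auto simp: t_def tgt_def in_keys_iff)
  define u where "u = t - {#c#}"
  have cin: "c \<in># t" by (simp add: t_def tgt_def)
  have usz: "size u = k + 2" unfolding u_def using cin by (simp add: size_Diff_singleton t_def tgt_def)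
  have "Poly_Mapping.lookup (a_coef n k) u =
     (\<Sum>m\<in>S. if m = t then Poly_Mapping.lookup (R (n+1)) m else 0)"
    unfolding a_coef_lookup S_def[symmetric]
  proof (rule sum.cong)
    fix m assume "m \<in> S"
    then have "c \<in># m" unfolding S_def c_def by auto
    then have "(m - {#n - k#} = u) = (m = t)" unfolding u_def c_def[symmetric]
      using cin by (metis insert_DiffM)
    then show "(if m - {#n - k#} = u then Poly_Mapping.lookup (R (n+1)) m else 0) =
      (if m = t then Poly_Mapping.lookup (R (n+1)) m else 0)" by simp
  qed simp
  also have "\<dots> = Poly_Mapping.lookup (R (n+1)) t" using finS tS by simp
  finally have unz: "Poly_Mapping.lookup (a_coef n k) u \<noteq> 0" using tnz by simp
  then have nz: "a_coef n k \<noteq> 0" by auto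
  have ukey: "u \<in> Poly_Mapping.keys (a_coef n k)" using unz by (simp add: in_keys_iff)
  have bound: "size v \<le> k + 2" if "v \<in> Poly_Mapping.keys (a_coef n k)" for v
  proof -
    from that have "Poly_Mapping.lookup (a_coef n k) v \<noteq> 0" by (simp add: in_keys_iff)
    then have "(\<Sum>m\<in>S. if m - {#n - k#} = v then Poly_Mapping.lookup (R (n+1)) m else 0) \<noteq> 0"
      unfolding a_coef_lookup S_def .
    from sum_nz[OF this] obtain m where m: "m \<in> S"
      "(if m - {#n - k#} = v then Poly_Mapping.lookup (R (n+1)) m else 0) \<noteq> 0" by blast
    then have mv: "m - {#c#} = v" and mnz: "Poly_Mapping.lookup (R (Suc n)) m \<noteq> 0"
      unfolding c_def by (auto split: if_splits)
    have cm: "c \<in># m" using m(1) unfolding S_def c_def by auto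
    from R_bound[OF mnz] cm have "c + size m \<le> n + 3" by blast
    then show ?thesis using cm mv nck by (auto simp: size_Diff_singleton)
  qed
  have "total_degree (a_coef n k) = k + 2"
    unfolding total_degree_def
  proof (rule Max_eqI)
    show "finite (insert 0 (size ` Poly_Mapping.keys (a_coef n k)))" by simp
    show "\<And>y. y \<in> insert 0 (size ` Poly_Mapping.keys (a_coef n k)) \<Longrightarrow> y \<le> k + 2"
      using bound by auto
    show "k + 2 \<in> insert 0 (size ` Poly_Mapping.keys (a_coef n k))"
      using ukey usz by force
  qed
  with nz show ?thesis by blast
qed

end
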